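(* Let $F\in\mathbb{C}[x]$ be a polynomial of degree $n\ge 2$ with roots $z_1,\ldots,z_n$ (listed with multiplicity). Let $k$ be an integer with $0\le k\le n$, let $K\in\mathbb{R}$ with $K\ge 1$, and let $c_1,c_2$ be real numbers satisfying \[ c_2\cdot n\cdot \ln\!\Big(\frac{1+2K}{2K}\Big)\;\ge\; c_1\cdot n\;\ge\;\frac{\max(1,k)}{\ln\!\big(1+\frac{1}{8K}\big)}. \] Let $\Delta=\Delta(m,r)$ be a disk and suppose there is a real $\lambda$ with \[ \lambda\ge\max\big(4c_2\cdot \max(1,k)\cdot n^3,\;16K\cdot\max(1,k)^2\cdot n\big) \] such that $\Delta$ is $(1,\lambda)$-isolating for the roots $z_1,\ldots,z_k$ of $F$. Then $T_k(c_1n\cdot\Delta,K,F)$ holds, i.e. \[ \left|\frac{F^{(k)}(m)(c_1nr)^k}{k!}\right|>K\sum_{i\ne k}\left|\frac{F^{(i)}(m)(c_1nr)^i}{i!}\right|. \]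
   Context: $\Delta(m,r)$ denotes the open disk in $\mathbb{C}$ with center $m$ and radius $r>0$, and $\lambda\cdot\Delta(m,r):=\Delta(m,\lambda r)$ for $\lambda>0$. For $0<\rho_1\le 1\le\rho_2$ and a set $S$ of roots of $F$ (counted with multiplicity), a disk $\Delta$ is called $(\rho_1,\rho_2)$-isolating for $S$ if $\rho_1\cdot\Delta$ contains exactly the roots in $S$ (with multiplicity) and $\rho_2\cdot\Delta\setminus\rho_1\cdot\Delta$ contains no root of $F$. For a disk $\Delta(m,r)$, $K\ge 1$ and $0\le k\le n$, the predicate $T_k(\Delta(m,r),K,F)$ (also written $T_k(m,r,K,F)$) holds iff $\left|\frac{F^{(k)}(m) r^k}{k!}\right|>K\sum_{i\neq k}\left|\frac{F^{(i)}(m)r^i}{i!}\right|$, the sum ranging over $i\in\{0,\ldots,n\}\setminus\{k\}$. *)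

theory Defs
  imports "HOL-Analysis.Analysis" "HOL-Computational_Algebra.Computational_Algebra"
begin

text \<open>The open disk Delta(m,r) is ball m r; rho * Delta(m,r) = Delta(m, rho*r).
  F^(i)(m) is poly ((pderiv ^^ i) F) m.\<close>

definition T_pred :: "nat \<Rightarrow> complex \<Rightarrow> real \<Rightarrow> real \<Rightarrow> complex poly \<Rightarrow> bool" where
  "T_pred k m r K F \<longleftrightarrow>
     norm (poly ((pderiv ^^ k) F) m * of_real (r ^ k) / of_nat (fact k)) >
     K * (\<Sum>i\<in>{0..degree F} - {k}. norm (poly ((pderiv ^^ i) F) m * of_real (r ^ i) / of_nat (fact i)))"

definition isolating :: "complex poly \<Rightarrow> complex multiset \<Rightarrow> complex \<Rightarrow> real \<Rightarrow> real \<Rightarrow> real \<Rightarrow> bool" where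
  "isolating F S m r rho1 rho2 \<longleftrightarrow>
     filter_mset (\<lambda>z. z \<in> ball m (rho1 * r)) (proots F) = S \<and>
     (\<forall>z. poly F z = 0 \<longrightarrow> z \<notin> ball m (rho2 * r) - ball m (rho1 * r))"

end

theory Submission
  imports Defs
begin

lemma higher_pderiv_pcompose_lin:
  "(pderiv ^^ i) (p \<circ>\<^sub>p [:a, b:]) = smult (b^i) (((pderiv^^i) p) \<circ>\<^sub>p [:a,b:])"
  for p :: "'a::field_char_0 poly"
proof (induction i)
  case (Suc i)
  have "pderiv [:a, b:] = [:b:]" by (simp add: pderiv_pCons)
  then show ?case using Suc by (simp add: pderiv_smult pderiv_pcompose mult.commute)
qed simp

lemma taylor_coeff:
  "coeff (p \<circ>\<^sub>p [:a, b:]) i = poly ((pderiv^^i) p) a * b^i / fact i"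
  for p :: "'a::field_char_0 poly"
proof -
  have "coeff ((pderiv^^i) (p \<circ>\<^sub>p [:a, b:])) 0 = fact i * coeff (p \<circ>\<^sub>p [:a, b:]) i"
    by (simp add: coeff_higher_pderiv pochhammer_fact)
  also have "coeff ((pderiv^^i) (p \<circ>\<^sub>p [:a, b:])) 0 = b^i * poly ((pderiv^^i) p) a"
    by (simp add: higher_pderiv_pcompose_lin)
  finally show ?thesis by (simp add: field_simps)
qed

definition dom :: "complex poly \<Rightarrow> real poly \<Rightarrow> bool" where
  "dom p P \<longleftrightarrow> (\<forall>i. norm (coeff p i) \<le> coeff P i)"

lemma dom_mult: "dom p P \<Longrightarrow> dom q Q \<Longrightarrow> dom (p*q) (P*Q)"
  unfolding dom_def
proof safe
  fix n assume a: "\<forall>i. norm (coeff p i) \<le> coeff P i" "\<forall>i. norm (coeff q i) \<le> coeff Q i"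
  have "norm (coeff (p*q) n) \<le> (\<Sum>i\<le>n. norm (coeff p i * coeff q (n-i)))"
    unfolding coeff_mult by (rule norm_sum)
  also have "\<dots> \<le> (\<Sum>i\<le>n. coeff P i * coeff Q (n-i))"
    by (intro sum_mono) (auto simp: norm_mult intro!: mult_mono a[rule_format] order_trans[OF norm_ge_zero])
  finally show "norm (coeff (p*q) n) \<le> coeff (P*Q) n" by (simp add: coeff_mult)
qed

lemma dom_prod: "(\<And>x. x \<in># M \<Longrightarrow> dom (f x) (g x)) \<Longrightarrow> dom (\<Prod>x\<in>#M. f x) (\<Prod>x\<in>#M. g x)"
proof (induction M)
  case empty then show ?case by (simp add: dom_def coeff_1)
next
  case (add x M) then show ?case by (simp add: dom_mult)
qed

lemma dom_sum_le:
  assumes "dom p P" "finite I"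
  shows "(\<Sum>i\<in>I. norm (coeff p i)) \<le> poly P 1"
proof -
  have nn: "\<And>i. 0 \<le> coeff P i" using assms(1) unfolding dom_def by (meson norm_ge_zero order_trans)
  have "(\<Sum>i\<in>I. norm (coeff p i)) \<le> (\<Sum>i\<in>I. coeff P i)"
    using assms(1) unfolding dom_def by (intro sum_mono) auto
  also have "\<dots> \<le> (\<Sum>i\<in>I \<union> {..degree P}. coeff P i)"
    using assms(2) nn by (intro sum_mono2) auto
  also have "\<dots> = (\<Sum>i\<le>degree P. coeff P i)"
    using assms(2) by (intro sum.mono_neutral_right) (auto simp: coeff_eq_0)
  also have "\<dots> = poly P 1" by (simp add: poly_altdef)
  finally show ?thesis .
qed

lemma pm_nonneg: fixes f :: "'a \<Rightarrow> real"
  shows "(\<And>x. x \<in># M \<Longrightarrow> 0 \<le> f x) \<Longrightarrow> 0 \<le> (\<Prod>x\<in>#M. f x)"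
  by (induction M) auto

lemma prod_mset_le_pow:
  fixes f :: "'a \<Rightarrow> real"
  shows "(\<And>x. x \<in># M \<Longrightarrow> 0 \<le> f x \<and> f x \<le> b) \<Longrightarrow> (\<Prod>x\<in>#M. f x) \<le> b ^ size M"
proof (induction M)
  case (add x M)
  have "0 \<le> (\<Prod>x\<in>#M. f x)" using add(2) by (intro pm_nonneg) auto
  moreover have "0 \<le> f x" "f x \<le> b" using add(2) by auto
  moreover have "0 \<le> b" using calculation by linarith
  ultimately show ?case using add by (auto intro!: mult_mono)
qed simp

lemma pcompose_prod_mset: "(\<Prod>x\<in>#M. f x) \<circ>\<^sub>p q = (\<Prod>x\<in>#M. f x \<circ>\<^sub>p q)"
  by (induction M) (simp_all add: pcompose_1 pcompose_mult)

lemma prod_mset_smult: "(\<Prod>x\<in>#M. smult (a x) (f x)) = smult (\<Prod>x\<in>#M. a x) (\<Prod>x\<in>#M. f x)"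
  by (induction M) (simp_all add: mult_smult_left mult_smult_right mult.commute)

lemma pm_const: "(\<Prod>x\<in>#M. c) = c ^ size M"
  by (induction M) auto

lemma monic_lin_prod:
  fixes a :: "'b \<Rightarrow> 'a::field"
  shows "degree (\<Prod>x\<in>#M. [:a x, 1:]) = size M \<and> lead_coeff (\<Prod>x\<in>#M. [:a x, 1:]) = 1"
proof (induction M)
  case (add x M)
  let ?p = "\<Prod>x\<in>#M. [:a x, 1:]"
  have nz: "?p \<noteq> 0" using add by auto
  have deg: "degree ([:a x, 1:] * ?p) = Suc (size M)" using add nz by (subst degree_mult_eq) auto
  have l1: "lead_coeff [:a x, 1:] = 1" by simp
  have lc: "lead_coeff ([:a x, 1:] * ?p) = 1" using add.IH[THEN conjunct2] l1
    by (simp only: lead_coeff_mult mult_1)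
  have eq: "(\<Prod>x\<in>#add_mset x M. [:a x,1:]) = [:a x, 1:] * ?p" by simp
  show ?case using deg lc eq by (metis size_add_mset)
qed simp

lemma dom_lin1: "dom [:a, 1:] [:norm a, 1:]"
  unfolding dom_def by (auto simp: coeff_pCons split: nat.split)

lemma dom_lin2: "dom [:1, a:] [:1, norm a:]"
  unfolding dom_def by (auto simp: coeff_pCons split: nat.split)

lemma dom_monom: "dom (monom 1 k) (monom 1 k)"
  unfolding dom_def by (auto simp: coeff_monom)

lemma bound_A:
  fixes K c1 :: real and n k :: nat
  assumes K: "K \<ge> 1" and n: "n \<ge> 1" and c1: "c1 * real n \<ge> real (max 1 k) / ln (1 + 1 / (8 * K))"
  shows "(1 + 1 / (c1 * n)) ^ k \<le> 1 + 1 / (8 * K)" and "c1 > 0"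
proof -
  have L: "ln (1 + 1 / (8 * K)) > 0" using K by (intro ln_gt_zero) (auto simp: field_simps)
  have m: "real (max 1 k) \<ge> 1" by simp
  have "real (max 1 k) / ln (1 + 1 / (8 * K)) > 0" using L m by simp
  then have cn: "c1 * n > 0" using c1 by linarith
  then show "c1 > 0" using n by (simp add: zero_less_mult_iff)
  have "real k / (c1 * n) \<le> real (max 1 k) / (c1 * n)" using cn by (intro divide_right_mono) auto
  also have "\<dots> \<le> ln (1 + 1 / (8 * K))" using c1 cn L by (simp add: divide_le_eq field_simps)
  finally have kd: "real k * (1 / (c1 * n)) \<le> ln (1 + 1 / (8 * K))" by simp
  have "(1 + 1 / (c1 * n)) ^ k \<le> exp (1 / (c1 * n)) ^ k"
    using cn by (intro power_mono) (auto simp: exp_ge_add_one_self)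
  also have "\<dots> = exp (real k * (1 / (c1 * n)))" by (subst exp_of_nat_mult) simp
  also have "\<dots> \<le> exp (ln (1 + 1 / (8 * K)))" using kd by simp
  also have "\<dots> = 1 + 1 / (8 * K)" using K by (intro exp_ln) (auto simp: field_simps)
  finally show "(1 + 1 / (c1 * n)) ^ k \<le> 1 + 1 / (8 * K)" .
qed

lemma bound_B:
  fixes K c1 c2 lam e :: real and n k N :: nat
  assumes K: "K \<ge> 1" and n: "n \<ge> 2" and c1p: "c1 > 0"
    and c2c1: "c2 * real n * ln ((1 + 2 * K) / (2 * K)) \<ge> c1 * real n"
    and lam: "lam \<ge> 4 * c2 * real (max 1 k) * real n ^ 3"
    and e: "0 \<le> e" "e \<le> c1 * n / lam" and N: "N \<le> n"
  shows "(1 + e) ^ N \<le> 1 + 1 / (8 * K)"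
proof -
  have "(1 + 2 * K) / (2 * K) = 1 + 1 / (2 * K)" using K by (simp add: field_simps)
  moreover have "ln (1 + 1 / (2 * K)) \<le> 1 / (2 * K)" using K by (intro ln_add_one_self_le_self) auto
  ultimately have Lle: "ln ((1 + 2 * K) / (2 * K)) \<le> 1 / (2 * K)" by simp
  have Lp: "ln ((1 + 2 * K) / (2 * K)) > 0" using K by (intro ln_gt_zero) (auto simp: field_simps)
  have np: "real n > 0" using n by simp
  have "c1 * real n \<le> (c2 * ln ((1 + 2 * K) / (2 * K))) * real n" using c2c1 by (simp add: mult_ac)
  then have c2c1': "c2 * ln ((1 + 2 * K) / (2 * K)) \<ge> c1" using np by (simp only: mult_le_cancel_right_pos)
  have "c2 * ln ((1 + 2 * K) / (2 * K)) > 0" using c2c1' c1p by linarith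
  then have c2p: "c2 > 0" using Lp by (simp add: zero_less_mult_iff)
  have c1le: "c1 \<le> c2 / (2 * K)"
  proof -
    have "c2 * ln ((1 + 2 * K) / (2 * K)) \<le> c2 * (1 / (2*K))" using Lle c2p by (intro mult_left_mono) auto
    then show ?thesis using c2c1' by simp
  qed
  have nn: "real n ^ 3 > 0" using n by simp
  have lam2: "lam \<ge> 4 * c2 * real n ^ 3"
  proof -
    have "4 * c2 * real n ^ 3 * 1 \<le> 4 * c2 * real n ^ 3 * real (max 1 k)"
      using c2p nn by (intro mult_left_mono) auto
    then show ?thesis using lam by (simp add: mult_ac)
  qed
  have "4 * c2 * real n ^ 3 > 0" using c2p nn by simp
  then have lamp: "lam > 0" using lam2 by linarith
  have "n * e \<le> n * (c1 * n / lam)" using e by (intro mult_left_mono) auto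
  also have "\<dots> = c1 * n^2 / lam" by (simp add: power2_eq_square)
  also have "\<dots> \<le> c1 * n^2 / (4 * c2 * real n ^ 3)" using c1p n lam2 c2p nn lamp
    by (intro divide_left_mono) auto
  also have "\<dots> = c1 / (4 * c2 * n)" using n by (simp add: power2_eq_square power3_eq_cube field_simps)
  also have "\<dots> \<le> (c2 / (2 * K)) / (4 * c2 * n)" using c1le c2p n by (intro divide_right_mono) auto
  also have "\<dots> = 1 / (8 * K * n)" using c2p by (simp add: field_simps)
  also have "\<dots> \<le> 1 / (16 * K)" using n K by (intro divide_left_mono) auto
  finally have ne: "n * e \<le> 1 / (16 * K)" .
  have "(1 + e) ^ N \<le> (1 + e) ^ n" using e N by (intro power_increasing) auto
  also have "\<dots> \<le> exp e ^ n" using e by (intro power_mono) (auto simp: exp_ge_add_one_self)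
  also have "\<dots> = exp (n * e)" by (simp add: exp_of_nat_mult)
  also have "\<dots> \<le> 1 + 2 * \<bar>n * e\<bar>"
  proof -
    have "1 / (16 * K) \<le> 1 / 16" using K by (intro divide_left_mono) auto
    then have "norm (n * e) \<le> 1/2" using ne e by simp
    then show ?thesis using exp_bound_lemma[of "n * e"] by simp
  qed
  also have "\<dots> \<le> 1 + 1 / (8 * K)" using ne e by auto
  finally show ?thesis .
qed

theorem theorem3p2:
  fixes F :: "complex poly" and n k :: nat and K c1 c2 lam r :: real
    and m :: complex and S :: "complex multiset"
  assumes deg: "degree F = n" and n2: "n \<ge> 2"
    and k: "k \<le> n" and K: "K \<ge> 1"
    and c2c1: "c2 * real n * ln ((1 + 2 * K) / (2 * K)) \<ge> c1 * real n"
    and c1: "c1 * real n \<ge> real (max 1 k) / ln (1 + 1 / (8 * K))"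
    and r: "r > 0"
    and S_roots: "S \<subseteq># proots F" and S_size: "size S = k"
    and lam: "lam \<ge> max (4 * c2 * real (max 1 k) * real n ^ 3) (16 * K * real (max 1 k) ^ 2 * real n)"
    and iso: "isolating F S m r 1 lam"
  shows "T_pred k m (c1 * real n * r) K F"
proof -
  have n1: "n \<ge> 1" using n2 by simp
  have c1p: "c1 > 0" using bound_A(2)[OF K n1 c1] .
  define R where "R = c1 * real n * r"
  have Rp: "R > 0" using c1p r n1 by (simp add: R_def)
  define q where "q = [:m, complex_of_real R:]"
  define G where "G = F \<circ>\<^sub>p q"
  have Gcoeff: "coeff G i = poly ((pderiv^^i) F) m * of_real (R^i) / of_nat (fact i)" for i
    by (simp add: G_def q_def taylor_coeff of_real_power)
  have Fnz: "F \<noteq> 0" using deg n2 by auto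
  have lamp: "lam > 0"
  proof -
    have "16 * K * real (max 1 k) ^ 2 * real n > 0" using K n1 by simp
    then show ?thesis using lam by linarith
  qed
  define P where "P = proots F"
  define T where "T = filter_mset (\<lambda>z. z \<notin> ball m r) P"
  have Sdef: "filter_mset (\<lambda>z. z \<in> ball m r) P = S" using iso by (simp add: isolating_def P_def)
  have PST: "P = S + T" unfolding T_def Sdef[symmetric] by (rule multiset_partition)
  have Smem: "norm (m - z) < r" if "z \<in># S" for z
    using that unfolding Sdef[symmetric] by (simp add: dist_norm)
  have Tmem: "norm (m - z) \<ge> lam * r" if "z \<in># T" for z
  proof -
    have "poly F z = 0" "z \<notin> ball m r" using that Fnz by (auto simp: T_def P_def)
    then have "z \<notin> ball m (lam * r)" using iso unfolding isolating_def by auto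
    then show ?thesis by (simp add: dist_norm)
  qed
  have Tnz: "m - z \<noteq> 0" if "z \<in># T" for z
    using Tmem[OF that] lamp r by (smt (verit) mult_pos_pos norm_zero)
  have sizeT: "size T \<le> n" using PST size_proots_complex[of F] deg by (simp add: P_def)
  define g where "g = (\<Prod>z\<in>#S. [:(m - z) / of_real R, 1:])"
  define h where "h = (\<Prod>z\<in>#T. [:1, of_real R / (m - z):])"
  define c where "c = lead_coeff F * of_real R ^ k * (\<Prod>z\<in>#T. (m - z))"
  have cnz: "c \<noteq> 0" using Fnz Rp Tnz by (auto simp: c_def)
  have lin: "[:-z, 1:] \<circ>\<^sub>p q = [:m - z, of_real R:]" for z
    by (simp add: q_def pcompose_pCons)
  have "G = smult (lead_coeff F) (\<Prod>z\<in>#P. [:-z, 1:]) \<circ>\<^sub>p q"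
    unfolding G_def P_def using complex_poly_decompose_multiset[of F] by simp
  also have "\<dots> = smult (lead_coeff F) (\<Prod>z\<in>#P. [:m - z, of_real R:])"
    by (simp add: pcompose_smult pcompose_prod_mset lin)
  also have "(\<Prod>z\<in>#P. [:m - z, of_real R:]) = (\<Prod>z\<in>#S. [:m - z, of_real R:]) * (\<Prod>z\<in>#T. [:m - z, of_real R:])"
    by (simp add: PST)
  also have "(\<Prod>z\<in>#S. [:m - z, of_real R:]) = (\<Prod>z\<in>#S. smult (of_real R) [:(m - z) / of_real R, 1:])"
    using Rp by (intro arg_cong[where f=prod_mset] image_mset_cong) simp
  also have "\<dots> = smult (of_real R ^ k) g"
    by (subst prod_mset_smult) (simp only: g_def S_size pm_const)
  also have "(\<Prod>z\<in>#T. [:m - z, of_real R:]) = (\<Prod>z\<in>#T. smult (m - z) [:1, of_real R / (m - z):])"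
    using Tnz by (intro arg_cong[where f=prod_mset] image_mset_cong) simp
  also have "\<dots> = smult (\<Prod>z\<in>#T. (m - z)) h"
    by (subst prod_mset_smult) (simp only: h_def)
  finally have Geq: "G = smult c (g * h)"
    by (simp add: c_def mult_smult_left mult_smult_right mult_ac)

  define P1 where "P1 = (\<Prod>z\<in>#S. [:norm ((m - z) / of_real R), 1:])"
  define H where "H = (\<Prod>z\<in>#T. [:1, norm (of_real R / (m - z)):])"
  have domg: "dom g P1" unfolding g_def P1_def by (intro dom_prod dom_lin1)
  have domh: "dom h H" unfolding h_def H_def by (intro dom_prod dom_lin2)
  have gk: "coeff g k = 1" using monic_lin_prod[of "\<lambda>z. (m - z) / of_real R" S] S_size
    unfolding g_def by metis
  have P1k: "coeff P1 k = 1" using monic_lin_prod[of "\<lambda>z. norm ((m - z) / of_real R)" S] S_size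
    unfolding P1_def by metis
  have h0: "coeff h 0 = 1" by (simp add: h_def poly_0_coeff_0[symmetric] poly_prod_mset)
  have H0: "coeff H 0 = 1" by (simp add: H_def poly_0_coeff_0[symmetric] poly_prod_mset)
  define g' where "g' = g - monom 1 k"
  define G1 where "G1 = P1 - monom 1 k"
  define h' where "h' = h - 1"
  define H' where "H' = H - 1"
  have domg': "dom g' G1"
    using domg unfolding dom_def g'_def G1_def by (auto simp: coeff_monom gk P1k)
  have domh': "dom h' H'"
    using domh unfolding dom_def h'_def H'_def by (auto simp: coeff_1 h0 H0)
  have h'0: "coeff h' 0 = 0" by (simp add: h'_def h0)
  have gh: "g * h = monom 1 k + monom 1 k * h' + g' * h"
    by (simp add: g'_def h'_def algebra_simps)
  define aa where "aa = poly G1 1"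
  define bb where "bb = poly H 1"
  have aa0: "0 \<le> aa" using dom_sum_le[OF domg', of "{}"] by (simp add: aa_def)
  have bb1: "1 \<le> bb" using dom_sum_le[OF domh', of "{}"] by (simp add: bb_def H'_def)
  have "poly P1 1 = (\<Prod>z\<in>#S. norm ((m - z) / of_real R) + 1)"
    by (simp add: P1_def poly_prod_mset)
  also have "\<dots> \<le> (1 + 1 / (c1 * n)) ^ size S"
  proof (rule prod_mset_le_pow)
    fix z assume z: "z \<in># S"
    have "norm ((m - z) / of_real R) = norm (m - z) / R" using Rp by (simp add: norm_divide)
    also have "\<dots> \<le> r / R" using Smem[OF z] Rp by (intro divide_right_mono) auto
    also have "\<dots> = 1 / (c1 * n)" using r by (simp add: R_def)
    finally show "0 \<le> norm ((m - z) / of_real R) + 1 \<and> norm ((m - z) / of_real R) + 1 \<le> 1 + 1 / (c1 * n)"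
      by simp
  qed
  also have "\<dots> \<le> 1 + 1 / (8 * K)" using bound_A(1)[OF K n1 c1] S_size by simp
  finally have aaub: "aa \<le> 1 / (8 * K)" by (simp add: aa_def G1_def poly_monom)
  have "bb = (\<Prod>z\<in>#T. 1 + norm (of_real R / (m - z)))"
    by (simp add: bb_def H_def poly_prod_mset)
  also have "\<dots> \<le> (1 + c1 * n / lam) ^ size T"
  proof (rule prod_mset_le_pow)
    fix z assume z: "z \<in># T"
    have nz: "norm (m - z) > 0" using Tnz[OF z] by simp
    have "norm (of_real R / (m - z)) = R / norm (m - z)" using Rp by (simp add: norm_divide)
    also have "\<dots> \<le> R / (lam * r)" using Tmem[OF z] Rp lamp r nz by (intro divide_left_mono) auto
    also have "\<dots> = c1 * n / lam" using r by (simp add: R_def)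
    finally show "0 \<le> 1 + norm (of_real R / (m - z)) \<and> 1 + norm (of_real R / (m - z)) \<le> 1 + c1 * n / lam"
      by simp
  qed
  also have "\<dots> \<le> 1 + 1 / (8 * K)"
  proof (rule bound_B[OF K n2 c1p c2c1 _ _ _ sizeT])
    show "4 * c2 * real (max 1 k) * real n ^ 3 \<le> lam" using lam by simp
    show "0 \<le> c1 * real n / lam" using c1p lamp by simp
  qed simp
  finally have bbub: "bb \<le> 1 + 1 / (8 * K)" .
  have X: "norm (coeff (g' * h) k) \<le> aa * bb"
    using dom_sum_le[OF dom_mult[OF domg' domh], of "{k}"] by (simp add: aa_def bb_def)
  have ck: "coeff (g * h) k = 1 + coeff (g' * h) k"
    by (simp add: gh coeff_monom_mult h'0)
  have lower: "norm (coeff (g * h) k) \<ge> 1 - aa * bb"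
  proof -
    have "1 = norm (coeff (g * h) k - coeff (g' * h) k)" using ck by simp
    also have "\<dots> \<le> norm (coeff (g * h) k) + norm (coeff (g' * h) k)" by (rule norm_triangle_ineq4)
    finally show ?thesis using X by simp
  qed
  define I where "I = {0..n} - {k}"
  have upper: "(\<Sum>i\<in>I. norm (coeff (g * h) i)) \<le> (bb - 1) + aa * bb"
  proof -
    have "(\<Sum>i\<in>I. norm (coeff (g * h) i)) \<le>
          (\<Sum>i\<in>I. norm (coeff (monom 1 k * h') i) + norm (coeff (g' * h) i))"
    proof (intro sum_mono)
      fix i assume "i \<in> I"
      then have "i \<noteq> k" by (simp add: I_def)
      then have "coeff (g * h) i = coeff (monom 1 k * h') i + coeff (g' * h) i"
        by (simp add: gh coeff_monom)
      then show "norm (coeff (g * h) i) \<le> norm (coeff (monom 1 k * h') i) + norm (coeff (g' * h) i)"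
        by (simp add: norm_triangle_ineq)
    qed
    also have "\<dots> = (\<Sum>i\<in>I. norm (coeff (monom 1 k * h') i)) + (\<Sum>i\<in>I. norm (coeff (g' * h) i))"
      by (rule sum.distrib)
    also have "\<dots> \<le> poly (monom 1 k * H') 1 + poly (G1 * H) 1"
      by (intro add_mono dom_sum_le dom_mult dom_monom domh' domg' domh) (simp_all add: I_def)
    also have "\<dots> = (bb - 1) + aa * bb" by (simp add: poly_monom H'_def bb_def aa_def)
    finally show ?thesis .
  qed
  have key: "K * ((bb - 1) + aa * bb) < 1 - aa * bb"
  proof -
    have Ka: "K * aa \<le> 1 / 8" using aaub K by (simp add: field_simps)
    have Kb: "K * (bb - 1) \<le> 1 / 8" using bbub K by (simp add: field_simps)
    have b98: "bb \<le> 9 / 8"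
    proof -
      have "1 / (8 * K) \<le> 1 / 8" using K by (intro divide_left_mono) auto
      then show ?thesis using bbub by simp
    qed
    have Kab: "(K * aa) * bb \<le> (1/8) * (9/8)" by (rule mult_mono[OF Ka b98]; use bb1 in linarith)
    have ab0: "aa * bb \<ge> 0" using aa0 bb1 by simp
    have ab: "aa * bb \<le> K * aa * bb" using mult_right_mono[OF K ab0] by (simp add: mult.assoc)
    show ?thesis using Ka Kb Kab ab by (simp add: algebra_simps)
  qed
  have Gc: "coeff G i = c * coeff (g * h) i" for i by (simp add: Geq)
  have cp: "norm c > 0" using cnz by simp
  have tw: "norm (poly ((pderiv ^^ i) F) m * of_real (R ^ i) / of_nat (fact i)) = norm c * norm (coeff (g*h) i)" for i
    by (simp only: Gcoeff[symmetric] Gc norm_mult)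
  have "K * (\<Sum>i\<in>{0..degree F} - {k}. norm (poly ((pderiv ^^ i) F) m * of_real (R ^ i) / of_nat (fact i)))
        = norm c * (K * (\<Sum>i\<in>I. norm (coeff (g * h) i)))"
    by (simp only: tw deg I_def) (simp add: sum_distrib_left mult_ac)
  also have "\<dots> \<le> norm c * (K * ((bb - 1) + aa * bb))"
    using upper K cp by (intro mult_left_mono) auto
  also have "\<dots> < norm c * (1 - aa * bb)" using key cp by simp
  also have "\<dots> \<le> norm c * norm (coeff (g * h) k)" using lower cp by simp
  also have "\<dots> = norm (poly ((pderiv ^^ k) F) m * of_real (R ^ k) / of_nat (fact k))"
    by (simp only: tw)
  finally show ?thesis unfolding T_pred_def R_def .
qed

end
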